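(* Let $P$ be a finite $(3+1)$-free poset and $T$ a $P$-array. Then $T$ is a $P$-tableau if and only if for each pair of adjacent columns $T_i,T_{i+1}$ of $T$, the ladder decomposition $L_m,\dots,L_1$ of $(T_i,T_{i+1})$ satisfies $\sum_{j=1}^k|L_j\cap T_i|\ge\sum_{j=1}^k|L_j\cap T_{i+1}|$ for all $k\in[m]$.
   Context: $a<_Pb$: strict order; $a\sim_Pb$: incomparable or equal. A $P$-array is a filling $T$ of a Young diagram (English notation) by elements of $P$ such that each column satisfies $T(1,c)<_PT(2,c)<_P\cdots$; it is a $P$-tableau if additionally $T(r,c+1)\not<_PT(r,c)$ whenever both boxes exist. Each column is viewed as a chain of $P$. For chains $C,D$, $\mathrm{inc}_P(C,D)$ is the bipartite graph on $C\sqcup D$ with an edge $c$—$d$ ($c\in C,d\in D$) when $c\sim_Pd$; its connected components are the ladders of $(C,D)$. For $(3+1)$-free $P$ the ladders are totally ordered in the sense that for two distinct ladders every element of one is $<_P$ every element of the other; the ladder decomposition $L_m,\dots,L_1$ lists the ladders in decreasing order (so $L_1$ is the smallest). *)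

theory Defs
  imports Main
begin

text \<open>The poset P is a finite type of class order; x < y is the strict order of P.
  x \<sim>_P y means incomparable or equal.\<close>

definition sim_P :: "'a::order \<Rightarrow> 'a \<Rightarrow> bool" where
  "sim_P x y \<longleftrightarrow> \<not> x < y \<and> \<not> y < x"

definition three_one_free :: "'a::order itself \<Rightarrow> bool" where
  "three_one_free _ \<longleftrightarrow>
     \<not> (\<exists>a b c d :: 'a. a < b \<and> b < c \<and> sim_P d a \<and> sim_P d b \<and> sim_P d c)"

text \<open>A filling of a Young diagram (English notation) is given as the list of its columns,
  column c being the list (T(1,c), T(2,c), ...).\<close>

definition young_filling :: "'a list list \<Rightarrow> bool" where
  "young_filling T \<longleftrightarrow> (\<forall>col\<in>set T. col \<noteq> []) \<and> sorted_wrt (\<ge>) (map length T)"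

definition P_array :: "'a::order list list \<Rightarrow> bool" where
  "P_array T \<longleftrightarrow> young_filling T \<and> (\<forall>col\<in>set T. sorted_wrt (<) col)"

definition P_tableau :: "'a::order list list \<Rightarrow> bool" where
  "P_tableau T \<longleftrightarrow> P_array T \<and>
     (\<forall>c r. Suc c < length T \<and> r < length (T ! Suc c) \<longrightarrow> \<not> (T ! Suc c ! r < T ! c ! r))"

text \<open>The incomparability graph inc_P(C,D) on the disjoint union C \<squnion> D
  (elements of C tagged Inl, elements of D tagged Inr).\<close>

definition inc_vertices :: "'a list \<Rightarrow> 'a list \<Rightarrow> ('a + 'a) set" where
  "inc_vertices C D = Inl ` set C \<union> Inr ` set D"

definition inc_edges :: "'a::order list \<Rightarrow> 'a list \<Rightarrow> (('a + 'a) \<times> ('a + 'a)) set" where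
  "inc_edges C D =
     {(Inl c, Inr d) | c d. c \<in> set C \<and> d \<in> set D \<and> sim_P c d} \<union>
     {(Inr d, Inl c) | c d. c \<in> set C \<and> d \<in> set D \<and> sim_P c d}"

definition ladders :: "'a::order list \<Rightarrow> 'a list \<Rightarrow> ('a + 'a) set set" where
  "ladders C D = {(inc_edges C D)\<^sup>* `` {v} | v. v \<in> inc_vertices C D}"

fun elem_val :: "'a + 'a \<Rightarrow> 'a" where
  "elem_val (Inl x) = x"
| "elem_val (Inr x) = x"

definition ladder_less :: "('a::order + 'a) set \<Rightarrow> ('a + 'a) set \<Rightarrow> bool" where
  "ladder_less L L' \<longleftrightarrow> (\<forall>u\<in>L. \<forall>v\<in>L'. elem_val u < elem_val v)"

text \<open>Ladder decomposition, listed in increasing order: index 0 is L_1 (the smallest),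
  the last entry is L_m.\<close>

definition ladder_decomposition :: "'a::order list \<Rightarrow> 'a list \<Rightarrow> ('a + 'a) set list" where
  "ladder_decomposition C D =
     (THE Ls. set Ls = ladders C D \<and> sorted_wrt ladder_less Ls)"

definition part_in_C :: "('a + 'a) set \<Rightarrow> nat" where
  "part_in_C L = card {x. Inl x \<in> L}"

definition part_in_D :: "('a + 'a) set \<Rightarrow> nat" where
  "part_in_D L = card {x. Inr x \<in> L}"

definition ladder_condition :: "'a::order list \<Rightarrow> 'a list \<Rightarrow> bool" where
  "ladder_condition C D \<longleftrightarrow>
     (let Ls = ladder_decomposition C D in
      \<forall>k\<in>{1..length Ls}. (\<Sum>j<k. part_in_C (Ls ! j)) \<ge> (\<Sum>j<k. part_in_D (Ls ! j)))"

end

theory Submission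
  imports Defs
begin


lemma sim_sym: "sim_P a b = sim_P b a"
  unfolding sim_P_def by auto

lemma sl_lt: "sorted_wrt (<) X \<Longrightarrow> i < j \<Longrightarrow> j < length X \<Longrightarrow> X!i < X!j"
  by (rule sorted_wrt_nth_less)

lemma sl_le: "sorted_wrt (<) (X::'a::order list) \<Longrightarrow> i \<le> j \<Longrightarrow> j < length X \<Longrightarrow> X!i \<le> X!j"
  by (metis order.order_iff_strict sl_lt)

lemma sl_inj: "sorted_wrt (<) (X::'a::order list) \<Longrightarrow> i < length X \<Longrightarrow> j < length X \<Longrightarrow> X!i = X!j \<Longrightarrow> i = j"
  by (metis linorder_neqE_nat order_less_irrefl sl_lt)

lemma sl_iff: "sorted_wrt (<) (X::'a::order list) \<Longrightarrow> i < length X \<Longrightarrow> j < length X \<Longrightarrow> X!i < X!j \<longleftrightarrow> i < j"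
  by (metis leI order.strict_iff_not sl_le sl_lt)

lemma sl_cmp: "sorted_wrt (<) (X::'a::order list) \<Longrightarrow> a \<in> set X \<Longrightarrow> b \<in> set X \<Longrightarrow> a \<noteq> b \<Longrightarrow> a < b \<or> b < a"
  by (metis in_set_conv_nth linorder_neqE_nat sl_lt)

lemma cut_edge: "(a,b) \<in> E\<^sup>* \<Longrightarrow> a \<in> S \<Longrightarrow> b \<notin> S \<Longrightarrow> \<exists>p q. (p,q) \<in> E \<and> p \<in> S \<and> q \<notin> S"
  by (induction rule: rtrancl_induct) auto

lemma core_step:
  fixes X Y :: "'a::order list" and inx iny :: "'a \<Rightarrow> 'b"
  assumes tof: "three_one_free TYPE('a)"
   and sX: "sorted_wrt (<) X" and sY: "sorted_wrt (<) Y"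
   and injx: "inj inx" and injy: "inj iny" and disj: "\<And>a b. inx a \<noteq> iny b"
   and edge: "\<And>p q. (p,q) \<in> E \<Longrightarrow> \<exists>i<length X. \<exists>j<length Y. sim_P (X!i) (Y!j) \<and>
        ((p = inx (X!i) \<and> q = iny (Y!j)) \<or> (p = iny (Y!j) \<and> q = inx (X!i)))"
   and closed: "\<And>p q. p \<in> L \<Longrightarrow> (p,q) \<in> E \<Longrightarrow> q \<in> L"
   and conn: "\<And>p q. p \<in> L \<Longrightarrow> q \<in> L \<Longrightarrow> (p,q) \<in> E\<^sup>*"
   and lbx: "\<And>i. i < length X \<Longrightarrow> inx (X!i) \<in> L \<Longrightarrow> s \<le> i"
   and lby: "\<And>i. i < length Y \<Longrightarrow> iny (Y!i) \<in> L \<Longrightarrow> u \<le> i"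
   and inxL: "\<And>i. i \<le> n \<Longrightarrow> inx (X!(s+i)) \<in> L" and lx: "s+n < length X"
   and inyL: "\<And>i. i \<le> n \<Longrightarrow> iny (Y!(u+i)) \<in> L" and ly: "u+n < length Y"
   and IH: "0 < n \<Longrightarrow> sim_P (X!(s+n-1)) (Y!(u+n-1))"
   and lt: "Y!(u+n) < X!(s+n)"
  shows False
proof -
  have disj2: "\<And>a b. iny b \<noteq> inx a" using disj by metis
  define A where "A = inx ` {X!i | i. s \<le> i \<and> i < s+n} \<union> iny ` {Y!i | i. u \<le> i \<and> i \<le> u+n}"
  have AL: "A \<subseteq> L"
  proof
    fix p assume "p \<in> A"
    then consider (x) i where "s \<le> i" "i < s+n" "p = inx (X!i)" | (y) i where "u \<le> i" "i \<le> u+n" "p = iny (Y!i)"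
      unfolding A_def by blast
    then show "p \<in> L"
    proof cases
      case x then show ?thesis using inxL[of "i-s"] by simp
    next
      case y then show ?thesis using inyL[of "i-u"] by simp
    qed
  qed
  have yA: "iny (Y!(u+n)) \<in> A" unfolding A_def by (intro UnI2 imageI) auto
  have xA: "inx (X!(s+n)) \<notin> A"
  proof
    assume "inx (X!(s+n)) \<in> A"
    then obtain i where "s \<le> i" "i < s+n" "inx (X!(s+n)) = inx (X!i)"
      unfolding A_def using disj disj2 by (auto simp: disj disj2)
    then have "X!(s+n) = X!i" using injx by (meson injD)
    then show False using sl_inj[OF sX, of "s+n" i] lx \<open>i < s+n\<close> by simp
  qed
  have "(iny (Y!(u+n)), inx (X!(s+n))) \<in> E\<^sup>*"
    using conn AL yA inxL[of n] by blast
  from cut_edge[OF this yA xA] obtain p q where pq: "(p,q) \<in> E" "p \<in> A" "q \<notin> A" by blast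
  have qL: "q \<in> L" using closed pq AL by blast
  from edge[OF pq(1)] obtain i j where ij: "i < length X" "j < length Y" "sim_P (X!i) (Y!j)"
    and cs: "(p = inx (X!i) \<and> q = iny (Y!j)) \<or> (p = iny (Y!j) \<and> q = inx (X!i))" by blast
  from cs show False
  proof
    assume h: "p = inx (X!i) \<and> q = iny (Y!j)"
    from pq(2) h obtain i' where i': "s \<le> i'" "i' < s+n" "inx (X!i) = inx (X!i')"
      unfolding A_def using disj disj2 by (auto simp: disj disj2)
    have "X!i = X!i'" using i'(3) injx by (meson injD)
    then have ii: "i = i'" using sl_inj[OF sX, of i i'] ij(1) i'(2) lx by simp
    have uj: "u \<le> j" using lby ij(2) qL h by blast
    have jn: "u + n < j"
    proof (rule ccontr)
      assume "\<not> u + n < j"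
      then have "Y!j \<in> {Y ! i |i. u \<le> i \<and> i \<le> u + n}" using uj by auto
      then have "q \<in> A" using h unfolding A_def by blast
      then show False using pq by blast
    qed
    have n0: "0 < n" using i' by simp
    define z where "z = X!(s+n-1)"
    define a where "a = Y!(u+n-1)"
    define b where "b = Y!(u+n)"
    define c where "c = Y!(u+n+1)"
    have za: "sim_P z a" using IH n0 unfolding z_def a_def by simp
    have ab: "a < b" unfolding a_def b_def using sl_lt[OF sY, of "u+n-1" "u+n"] ly n0 by simp
    have bc: "b < c" unfolding c_def b_def using sl_lt[OF sY, of "u+n" "u+n+1"] jn ij(2) by simp
    have xz: "X!i \<le> z" unfolding z_def using sl_le[OF sX, of i "s+n-1"] ii i' lx by simp
    have cj: "c \<le> Y!j" unfolding c_def using sl_le[OF sY, of "u+n+1" j] jn ij(2) by simp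
    have key: "sim_P z w" if "a < w" "w \<le> Y!j" for w
    proof -
      have "\<not> w < z" using za that unfolding sim_P_def by (meson order.strict_trans)
      moreover have "\<not> z < w"
      proof
        assume "z < w"
        then have "X!i < Y!j" using xz that by (meson order.strict_trans1 order.strict_trans2)
        then show False using ij(3) unfolding sim_P_def by simp
      qed
      ultimately show ?thesis unfolding sim_P_def by simp
    qed
    have "sim_P z b" using key ab bc cj by (meson order.strict_implies_order order.trans)
    moreover have "sim_P z c" using key ab bc cj by (meson order.strict_trans)
    ultimately show False using tof za ab bc unfolding three_one_free_def by blast
  next
    assume h: "p = iny (Y!j) \<and> q = inx (X!i)"
    from pq(2) h obtain j' where j': "u \<le> j'" "j' \<le> u+n" "iny (Y!j) = iny (Y!j')"
      unfolding A_def using disj disj2 by (auto simp: disj disj2)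
    have "Y!j = Y!j'" using j'(3) injy by (meson injD)
    then have jj: "j = j'" using sl_inj[OF sY, of j j'] ij(2) j'(2) ly by simp
    have si: "s \<le> i" using lbx ij(1) qL h by blast
    have "s + n \<le> i"
    proof (rule ccontr)
      assume "\<not> s + n \<le> i"
      then have "X!i \<in> {X ! i |i. s \<le> i \<and> i < s + n}" using si by auto
      then have "q \<in> A" using h unfolding A_def by blast
      then show False using pq by blast
    qed
    then have "X!(s+n) \<le> X!i" using sl_le[OF sX] ij(1) by blast
    moreover have "Y!j \<le> Y!(u+n)" using sl_le[OF sY] jj j' ly by blast
    ultimately have "Y!j < X!i" using lt by (meson order.strict_trans1 order.strict_trans2)
    then show False using ij(3) unfolding sim_P_def by simp
  qed
qed


lemma core:
  fixes X Y :: "'a::order list" and inx iny :: "'a \<Rightarrow> 'b"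
  assumes tof: "three_one_free TYPE('a)"
   and sX: "sorted_wrt (<) X" and sY: "sorted_wrt (<) Y"
   and injx: "inj inx" and injy: "inj iny" and disj: "\<And>a b. inx a \<noteq> iny b"
   and edge: "\<And>p q. (p,q) \<in> E \<Longrightarrow> \<exists>i<length X. \<exists>j<length Y. sim_P (X!i) (Y!j) \<and>
        ((p = inx (X!i) \<and> q = iny (Y!j)) \<or> (p = iny (Y!j) \<and> q = inx (X!i)))"
   and closed: "\<And>p q. p \<in> L \<Longrightarrow> (p,q) \<in> E \<Longrightarrow> q \<in> L"
   and conn: "\<And>p q. p \<in> L \<Longrightarrow> q \<in> L \<Longrightarrow> (p,q) \<in> E\<^sup>*"
   and lbx: "\<And>i. i < length X \<Longrightarrow> inx (X!i) \<in> L \<Longrightarrow> s \<le> i"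
   and lby: "\<And>i. i < length Y \<Longrightarrow> iny (Y!i) \<in> L \<Longrightarrow> u \<le> i"
  shows "(\<forall>i\<le>n. inx (X!(s+i)) \<in> L) \<Longrightarrow> s+n < length X \<Longrightarrow>
         (\<forall>i\<le>n. iny (Y!(u+i)) \<in> L) \<Longrightarrow> u+n < length Y \<Longrightarrow> sim_P (X!(s+n)) (Y!(u+n))"
proof (induction n)
  case 0
  note c0 = 0
  have disj2: "\<And>a b. iny a \<noteq> inx b" using disj by metis
  have edge2: "\<And>p q. (p,q) \<in> E \<Longrightarrow> \<exists>i<length Y. \<exists>j<length X. sim_P (Y!i) (X!j) \<and>
        ((p = iny (Y!i) \<and> q = inx (X!j)) \<or> (p = inx (X!j) \<and> q = iny (Y!i)))"
    using edge sim_sym by meson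
  have "\<not> Y!(u+0) < X!(s+0)"
    using core_step[OF tof sX sY injx injy disj edge closed conn lbx lby, where n=0] c0 by auto
  moreover have "\<not> X!(s+0) < Y!(u+0)"
    using core_step[OF tof sY sX injy injx disj2 edge2 closed conn lby lbx, where n=0] c0 by auto
  ultimately show ?case unfolding sim_P_def by simp
next
  case (Suc n)
  have disj2: "\<And>a b. iny a \<noteq> inx b" using disj by metis
  have edge2: "\<And>p q. (p,q) \<in> E \<Longrightarrow> \<exists>i<length Y. \<exists>j<length X. sim_P (Y!i) (X!j) \<and>
        ((p = iny (Y!i) \<and> q = inx (X!j)) \<or> (p = inx (X!j) \<and> q = iny (Y!i)))"
    using edge sim_sym by meson
  have ih: "sim_P (X!(s+n)) (Y!(u+n))" using Suc by simp
  have ih': "0 < Suc n \<Longrightarrow> sim_P (X!(s+Suc n-1)) (Y!(u+Suc n-1))" using ih by simp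
  have ih'': "0 < Suc n \<Longrightarrow> sim_P (Y!(u+Suc n-1)) (X!(s+Suc n-1))" using ih sim_sym[of "X!(s+n)"] by simp
  have "\<not> Y!(u+Suc n) < X!(s+Suc n)"
  proof
    assume lt: "Y!(u+Suc n) < X!(s+Suc n)"
    show False
      by (rule core_step[OF tof sX sY injx injy disj edge closed conn lbx lby, where n="Suc n"])
        (use Suc.prems ih' lt in auto)
  qed
  moreover have "\<not> X!(s+Suc n) < Y!(u+Suc n)"
  proof
    assume lt: "X!(s+Suc n) < Y!(u+Suc n)"
    show False
      by (rule core_step[OF tof sY sX injy injx disj2 edge2 closed conn lby lbx, where n="Suc n"])
        (use Suc.prems ih'' lt in auto)
  qed
  ultimately show ?case unfolding sim_P_def by simp
qed




lemma sorted_wrt_exists: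
  assumes "finite S"
    and "\<And>x y. x\<in>S \<Longrightarrow> y\<in>S \<Longrightarrow> x \<noteq> y \<Longrightarrow> R x y \<or> R y x"
    and "\<And>x y z. x\<in>S \<Longrightarrow> y\<in>S \<Longrightarrow> z\<in>S \<Longrightarrow> R x y \<Longrightarrow> R y z \<Longrightarrow> R x z"
  shows "\<exists>xs. set xs = S \<and> sorted_wrt R xs"
  using assms
proof (induction S rule: finite_induct)
  case empty show ?case by simp
next
  case (insert x F)
  have p1: "R a b \<or> R b a" if "a\<in>F" "b\<in>F" "a \<noteq> b" for a b
    using insert.prems(1)[of a b] that by simp
  have p2: "R a c" if "a\<in>F" "b\<in>F" "c\<in>F" "R a b" "R b c" for a b c
    using insert.prems(2)[of a b c] that by simp
  have "\<exists>xs. set xs = F \<and> sorted_wrt R xs"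
    by (rule insert.IH[OF p1 p2])
  then obtain xs where xs: "set xs = F" "sorted_wrt R xs" by blast
  define ys where "ys = filter (\<lambda>y. R y x) xs @ x # filter (\<lambda>y. R x y) xs"
  have "set ys = insert x F"
  proof -
    have "y \<in> set ys" if "y \<in> F" for y
    proof -
      have "y \<noteq> x" using that insert.hyps by blast
      then have "R y x \<or> R x y" using insert.prems(1)[of y x] that by simp
      then show ?thesis unfolding ys_def using xs(1) that by auto
    qed
    moreover have "set ys \<subseteq> insert x F" unfolding ys_def using xs(1) by auto
    moreover have "x \<in> set ys" unfolding ys_def by simp
    ultimately show ?thesis by blast
  qed
  moreover have "sorted_wrt R ys"
  proof -
    have t: "R a b" if "a \<in> set xs" "R a x" "b \<in> set xs" "R x b" for a b
      using insert.prems(2)[of a x b] that xs(1) by simp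
    show ?thesis
      unfolding ys_def sorted_wrt_append
      using xs(2) t by (simp add: sorted_wrt_filter)
  qed
  ultimately show ?case by blast
qed

lemma sorted_wrt_unique:
  assumes "sorted_wrt R xs" "sorted_wrt R ys" "set xs = set ys"
    "\<And>x y. x \<in> set xs \<Longrightarrow> y \<in> set xs \<Longrightarrow> R x y \<Longrightarrow> \<not> R y x"
  shows "xs = ys"
  using assms
proof (induction xs arbitrary: ys)
  case Nil thus ?case by simp
next
  case (Cons x xs)
  have s1: "sorted_wrt R (x#xs)" and s2: "sorted_wrt R ys" and st: "set (x#xs) = set ys"
    using Cons.prems(1,2,3) by blast+
  have as: "\<not> R b a" if "a \<in> set (x#xs)" "b \<in> set (x#xs)" "R a b" for a b
    using Cons.prems(4)[of a b] that by blast
  obtain y ys' where ys: "ys = y # ys'" using st by (cases ys) auto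
  have xs1: "\<forall>z\<in>set xs. R x z" "sorted_wrt R xs" using s1 by simp_all
  have ys1: "\<forall>z\<in>set ys'. R y z" "sorted_wrt R ys'" using s2 ys by simp_all
  have xy: "x = y"
  proof (rule ccontr)
    assume "x \<noteq> y"
    then have a: "y \<in> set xs" "x \<in> set ys'" using st ys by auto
    then have "R x y" "R y x" using xs1 ys1 by auto
    then show False using as[of x y] a by simp
  qed
  have "x \<notin> set xs" using xs1(1) as[of x x] by auto
  moreover have "y \<notin> set ys'" using ys1(1) as[of y y] st ys by auto
  ultimately have "set xs = set ys'" using st ys xy by auto
  moreover have "\<And>a b. a \<in> set xs \<Longrightarrow> b \<in> set xs \<Longrightarrow> R a b \<Longrightarrow> \<not> R b a"
    using as by simp
  ultimately have "xs = ys'" using Cons.IH[of ys'] xs1(2) ys1(2) by blast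
  then show ?case using ys xy by simp
qed

lemma sym_inc: "sym (inc_edges C D)"
  unfolding sym_def inc_edges_def by blast

lemma edge_sim: "(p,q) \<in> inc_edges C D \<Longrightarrow> sim_P (elem_val p) (elem_val q)"
  unfolding inc_edges_def by (auto simp: sim_P_def)

lemma edge_V: "(p,q) \<in> inc_edges C D \<Longrightarrow> p \<in> inc_vertices C D \<and> q \<in> inc_vertices C D"
  unfolding inc_edges_def inc_vertices_def by auto

lemma rt_sym: "sym E \<Longrightarrow> (a,b) \<in> E\<^sup>* \<Longrightarrow> (b,a) \<in> E\<^sup>*"
  by (meson sym_rtrancl symD)

lemma rt_class: "sym E \<Longrightarrow> (a,b) \<in> E\<^sup>* \<Longrightarrow> E\<^sup>* `` {a} = E\<^sup>* `` {b}"
proof -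
  assume s: "sym E" and ab: "(a,b) \<in> E\<^sup>*"
  have ba: "(b,a) \<in> E\<^sup>*" using rt_sym[OF s ab] .
  show ?thesis
  proof (rule set_eqI)
    fix x show "x \<in> E\<^sup>* `` {a} \<longleftrightarrow> x \<in> E\<^sup>* `` {b}"
      using rtrancl_trans[OF ab, of x] rtrancl_trans[OF ba, of x] by blast
  qed
qed

lemma ladders_def2: "ladders C D = (\<lambda>v. (inc_edges C D)\<^sup>* `` {v}) ` inc_vertices C D"
  unfolding ladders_def by auto

lemma ladder_conn: "L \<in> ladders C D \<Longrightarrow> p \<in> L \<Longrightarrow> q \<in> L \<Longrightarrow> (p,q) \<in> (inc_edges C D)\<^sup>*"
proof -
  assume a: "L \<in> ladders C D" "p \<in> L" "q \<in> L"
  then obtain v where "(v,p) \<in> (inc_edges C D)\<^sup>*" "(v,q) \<in> (inc_edges C D)\<^sup>*"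
    unfolding ladders_def2 by auto
  then show ?thesis using rt_sym[OF sym_inc] rtrancl_trans by metis
qed

lemma ladder_closed: "L \<in> ladders C D \<Longrightarrow> p \<in> L \<Longrightarrow> (p,q) \<in> inc_edges C D \<Longrightarrow> q \<in> L"
  unfolding ladders_def2 by auto

lemma ladder_sub: "L \<in> ladders C D \<Longrightarrow> L \<subseteq> inc_vertices C D"
proof
  fix p assume "L \<in> ladders C D" "p \<in> L"
  then obtain v where v: "v \<in> inc_vertices C D" "(v,p) \<in> (inc_edges C D)\<^sup>*"
    unfolding ladders_def2 by auto
  from v(2) show "p \<in> inc_vertices C D"
    by (cases rule: rtrancl.cases) (use v(1) edge_V in auto)
qed

lemma ladder_self: "v \<in> inc_vertices C D \<Longrightarrow> v \<in> (inc_edges C D)\<^sup>* `` {v} \<and> (inc_edges C D)\<^sup>* `` {v} \<in> ladders C D"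
  unfolding ladders_def2 by auto

lemma ladder_eq: "L \<in> ladders C D \<Longrightarrow> L' \<in> ladders C D \<Longrightarrow> p \<in> L \<Longrightarrow> q \<in> L'
   \<Longrightarrow> (p,q) \<in> (inc_edges C D)\<^sup>* \<Longrightarrow> L = L'"
proof -
  assume a: "L \<in> ladders C D" "L' \<in> ladders C D" "p \<in> L" "q \<in> L'" "(p,q) \<in> (inc_edges C D)\<^sup>*"
  obtain v v' where vv: "L = (inc_edges C D)\<^sup>* `` {v}" "L' = (inc_edges C D)\<^sup>* `` {v'}"
    using a(1,2) unfolding ladders_def2 by auto
  have "(v,p) \<in> (inc_edges C D)\<^sup>*" "(v',q) \<in> (inc_edges C D)\<^sup>*" using vv a(3,4) by auto
  then have "L = (inc_edges C D)\<^sup>* `` {p}" "L' = (inc_edges C D)\<^sup>* `` {q}"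
    using vv rt_class[OF sym_inc] by metis+
  then show "L = L'" using rt_class[OF sym_inc a(5)] by simp
qed

lemma ladder_nonempty: "L \<in> ladders C D \<Longrightarrow> L \<noteq> {}"
  unfolding ladders_def2 by auto




context
  fixes C D :: "'a::order list"
  assumes sC: "sorted_wrt (<) C" and sD: "sorted_wrt (<) D"
begin

abbreviation "EE \<equiv> inc_edges C D"
abbreviation "VV \<equiv> inc_vertices C D"

lemma cmp_vert:
  assumes "p \<in> VV" "q \<in> VV" "(p,q) \<notin> EE\<^sup>*"
  shows "elem_val p < elem_val q \<or> elem_val q < elem_val p"
proof (cases p)
  case (Inl a)
  show ?thesis
  proof (cases q)
    case (Inl b)
    have "a \<noteq> b" using assms(3) Inl \<open>p = Inl a\<close> by auto
    then show ?thesis using sl_cmp[OF sC, of a b] assms(1,2) Inl \<open>p = Inl a\<close>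
      unfolding inc_vertices_def by auto
  next
    case (Inr b)
    have "\<not> sim_P a b"
    proof
      assume "sim_P a b"
      then have "(p,q) \<in> EE" using assms(1,2) Inr \<open>p = Inl a\<close>
        unfolding inc_edges_def inc_vertices_def by auto
      then show False using assms(3) by auto
    qed
    then show ?thesis using Inr \<open>p = Inl a\<close> unfolding sim_P_def by auto
  qed
next
  case (Inr a)
  show ?thesis
  proof (cases q)
    case (Inr b)
    have "a \<noteq> b" using assms(3) Inr \<open>p = Inr a\<close> by auto
    then show ?thesis using sl_cmp[OF sD, of a b] assms(1,2) Inr \<open>p = Inr a\<close>
      unfolding inc_vertices_def by auto
  next
    case (Inl b)
    have "\<not> sim_P b a"
    proof
      assume "sim_P b a"
      then have "(p,q) \<in> EE" using assms(1,2) Inl \<open>p = Inr a\<close>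
        unfolding inc_edges_def inc_vertices_def by auto
      then show False using assms(3) by auto
    qed
    then show ?thesis using Inl \<open>p = Inr a\<close> unfolding sim_P_def by auto
  qed
qed

lemma side_lt:
  assumes L: "L \<in> ladders C D" and cmpw: "\<And>u. u \<in> L \<Longrightarrow> elem_val u < w \<or> w < elem_val u"
    and u0: "u0 \<in> L" "elem_val u0 < w" and u: "u \<in> L"
  shows "elem_val u < w"
proof -
  have "(u0,u) \<in> EE\<^sup>*" using ladder_conn[OF L u0(1) u] .
  then show ?thesis
  proof (induction rule: rtrancl_induct)
    case base then show ?case using u0 by simp
  next
    case (step y z)
    have yL: "y \<in> L" using ladder_closed[OF L] rtrancl_induct[OF step(1), of "\<lambda>t. t \<in> L"] u0(1) by blast
    have zL: "z \<in> L" using ladder_closed[OF L yL step(2)] .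
    have "sim_P (elem_val y) (elem_val z)" using edge_sim[OF step(2)] .
    then have "\<not> w < elem_val z" using step(3) unfolding sim_P_def by (meson order.strict_trans)
    then show ?case using cmpw[OF zL] by blast
  qed
qed

lemma side_gt:
  assumes L: "L \<in> ladders C D" and cmpw: "\<And>u. u \<in> L \<Longrightarrow> elem_val u < w \<or> w < elem_val u"
    and u0: "u0 \<in> L" "w < elem_val u0" and u: "u \<in> L"
  shows "w < elem_val u"
proof -
  have "(u0,u) \<in> EE\<^sup>*" using ladder_conn[OF L u0(1) u] .
  then show ?thesis
  proof (induction rule: rtrancl_induct)
    case base then show ?case using u0 by simp
  next
    case (step y z)
    have yL: "y \<in> L" using ladder_closed[OF L] rtrancl_induct[OF step(1), of "\<lambda>t. t \<in> L"] u0(1) by blast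
    have zL: "z \<in> L" using ladder_closed[OF L yL step(2)] .
    have "sim_P (elem_val y) (elem_val z)" using edge_sim[OF step(2)] .
    then have "\<not> elem_val z < w" using step(3) unfolding sim_P_def by (meson order.strict_trans)
    then show ?case using cmpw[OF zL] by blast
  qed
qed

lemma diff_ladders_cmp:
  assumes L: "L \<in> ladders C D" and L': "L' \<in> ladders C D" and ne: "L \<noteq> L'"
    and u: "u \<in> L" and v: "v \<in> L'"
  shows "elem_val u < elem_val v \<or> elem_val v < elem_val u"
proof -
  have "(u,v) \<notin> EE\<^sup>*" using ladder_eq[OF L L' u v] ne by blast
  then show ?thesis using cmp_vert ladder_sub[OF L] ladder_sub[OF L'] u v by blast
qed

lemma ladders_less_aux:
  assumes L: "L \<in> ladders C D" and L': "L' \<in> ladders C D" and ne: "L \<noteq> L'"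
    and u0: "u0 \<in> L" and v0: "v0 \<in> L'" and lt: "elem_val u0 < elem_val v0"
  shows "ladder_less L L'"
  unfolding ladder_less_def
proof (intro ballI)
  fix u v assume u: "u \<in> L" and v: "v \<in> L'"
  have "elem_val u0 < elem_val v"
    by (rule side_gt[OF L' _ v0 lt v]) (use diff_ladders_cmp[OF L L' ne u0] in blast)
  then show "elem_val u < elem_val v"
    by (intro side_lt[OF L _ u0 _ u]) (use diff_ladders_cmp[OF L L' ne _ v] in blast)+
qed

lemma ladders_total:
  assumes L: "L \<in> ladders C D" and L': "L' \<in> ladders C D" and ne: "L \<noteq> L'"
  shows "ladder_less L L' \<or> ladder_less L' L"
proof -
  obtain u0 v0 where u0: "u0 \<in> L" and v0: "v0 \<in> L'"
    using ladder_nonempty[OF L] ladder_nonempty[OF L'] by blast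
  from diff_ladders_cmp[OF L L' ne u0 v0] show ?thesis
    using ladders_less_aux[OF L L' ne u0 v0] ladders_less_aux[OF L' L ne[symmetric] v0 u0] by blast
qed

end



definition pre :: "('a + 'a) set list \<Rightarrow> ('a \<Rightarrow> 'a + 'a) \<Rightarrow> nat \<Rightarrow> 'a set" where
  "pre Ls f k = {x. \<exists>j<k. f x \<in> Ls!j}"

lemma pre_sum:
  assumes fin: "\<And>j. j < length Ls \<Longrightarrow> finite {x. f x \<in> Ls!j}"
    and uniq: "\<And>i j v. i < length Ls \<Longrightarrow> j < length Ls \<Longrightarrow> v \<in> Ls!i \<Longrightarrow> v \<in> Ls!j \<Longrightarrow> i = j"
  shows "k \<le> length Ls \<Longrightarrow> (\<Sum>j<k. card {x. f x \<in> Ls!j}) = card (pre Ls f k) \<and> finite (pre Ls f k)"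
proof (induction k)
  case 0 then show ?case by (simp add: pre_def)
next
  case (Suc k)
  have e: "pre Ls f (Suc k) = pre Ls f k \<union> {x. f x \<in> Ls!k}"
    unfolding pre_def using less_Suc_eq by auto
  have d: "pre Ls f k \<inter> {x. f x \<in> Ls!k} = {}"
  proof (rule equals0I)
    fix x assume "x \<in> pre Ls f k \<inter> {x. f x \<in> Ls!k}"
    then obtain j where j: "j < k" "f x \<in> Ls!j" "f x \<in> Ls!k" unfolding pre_def by blast
    then have "j = k" using uniq[of j k "f x"] Suc.prems by simp
    then show False using j by simp
  qed
  have f: "finite {x. f x \<in> Ls!k}" using fin Suc.prems by simp
  have ih: "(\<Sum>j<k. card {x. f x \<in> Ls!j}) = card (pre Ls f k)" "finite (pre Ls f k)"
    using Suc by auto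
  show ?case using e d f ih card_Un_disjoint[OF ih(2) f d] by simp
qed

definition downset :: "'a::order set \<Rightarrow> 'a list \<Rightarrow> bool" where
  "downset S X \<longleftrightarrow> (\<forall>x\<in>S. \<forall>y\<in>set X. y < x \<longrightarrow> y \<in> S)"

lemma dn_a:
  assumes sX: "sorted_wrt (<) (X::'a::order list)" and S: "S \<subseteq> set X" and dn: "downset S X"
    and r: "r < length X" and xr: "X!r \<in> S"
  shows "Suc r \<le> card S"
proof -
  have sub: "(!) X ` {..r} \<subseteq> S"
  proof
    fix y assume "y \<in> (!) X ` {..r}"
    then obtain i where i: "i \<le> r" "y = X!i" by auto
    show "y \<in> S"
    proof (cases "i = r")
      case True then show ?thesis using i xr by simp
    next
      case False
      then have "X!i < X!r" using sl_lt[OF sX, of i r] i r by simp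
      then show ?thesis using dn xr i r unfolding downset_def by auto
    qed
  qed
  have inj: "inj_on ((!) X) {..r}"
    using sl_inj[OF sX] r by (intro inj_onI) auto
  have "card ((!) X ` {..r}) = Suc r" using card_image[OF inj] by simp
  moreover have "finite S" using S finite_subset by blast
  ultimately show ?thesis using card_mono[OF _ sub] by simp
qed

lemma dn_b:
  assumes sX: "sorted_wrt (<) (X::'a::order list)" and S: "S \<subseteq> set X" and dn: "downset S X"
    and r: "r < length X" and xr: "X!r \<notin> S"
  shows "card S \<le> r"
proof -
  have sub: "S \<subseteq> (!) X ` {..<r}"
  proof
    fix y assume y: "y \<in> S"
    have "y \<in> set X" using S y by blast
    then obtain i where i: "i < length X" "y = X!i" by (auto simp: in_set_conv_nth)
    have "i < r"
    proof (rule ccontr)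
      assume "\<not> i < r"
      then consider "i = r" | "r < i" by linarith
      then show False
      proof cases
        case 1 then show ?thesis using xr y i by simp
      next
        case 2
        then have "X!r < X!i" using sl_lt[OF sX] i by simp
        then show ?thesis using dn y i xr r unfolding downset_def by auto
      qed
    qed
    then show "y \<in> (!) X ` {..<r}" using i by auto
  qed
  have "card S \<le> card ((!) X ` {..<r})" by (rule card_mono[OF _ sub]) simp
  also have "\<dots> \<le> r" using card_image_le[of "{..<r}" "(!) X"] by simp
  finally show ?thesis .
qed

context
  fixes C D :: "'a::order list"
  assumes sC: "sorted_wrt (<) C" and sD: "sorted_wrt (<) D"
begin

abbreviation "LL \<equiv> ladder_decomposition C D"

lemma LD_props: "set LL = ladders C D \<and> sorted_wrt ladder_less LL"
  unfolding ladder_decomposition_def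
proof (rule theI')
  have fin: "finite (ladders C D)" unfolding ladders_def2 inc_vertices_def by simp
  have trans: "ladder_less L1 L3" if "L1 \<in> ladders C D" "L2 \<in> ladders C D" "L3 \<in> ladders C D"
    "ladder_less L1 L2" "ladder_less L2 L3" for L1 L2 L3
  proof -
    note h = that
    obtain w where "w \<in> L2" using ladder_nonempty h(2) by blast
    then show ?thesis using h(4,5) unfolding ladder_less_def by (meson order.strict_trans)
  qed
  have asym: "\<not> ladder_less L2 L1" if "L1 \<in> ladders C D" "L2 \<in> ladders C D" "ladder_less L1 L2" for L1 L2
  proof -
    note h = that
    obtain w where w: "w \<in> L2" using ladder_nonempty h(2) by blast
    obtain v where v: "v \<in> L1" using ladder_nonempty h(1) by blast
    show ?thesis using h(3) v w unfolding ladder_less_def by (meson order.asym)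
  qed
  obtain xs where xs: "set xs = ladders C D" "sorted_wrt ladder_less xs"
    using sorted_wrt_exists[OF fin, of ladder_less] ladders_total[OF sC sD] trans by blast
  show "\<exists>!Ls. set Ls = ladders C D \<and> sorted_wrt ladder_less Ls"
  proof (rule ex1I[of _ xs])
    show "set xs = ladders C D \<and> sorted_wrt ladder_less xs" using xs by simp
  next
    fix ys assume ys: "set ys = ladders C D \<and> sorted_wrt ladder_less ys"
    show "ys = xs"
      by (rule sorted_wrt_unique[of ladder_less]) (use ys xs asym in auto)
  qed
qed

lemma LL_in: "i < length LL \<Longrightarrow> LL!i \<in> ladders C D"
  using LD_props nth_mem by blast

lemma LL_lt: "i < j \<Longrightarrow> j < length LL \<Longrightarrow> ladder_less (LL!i) (LL!j)"
  using LD_props sorted_wrt_nth_less by blast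

lemma LL_idx: "v \<in> (inc_vertices C D) \<Longrightarrow> \<exists>j<length LL. v \<in> LL!j"
proof -
  assume v: "v \<in> (inc_vertices C D)"
  then have "(inc_edges C D)\<^sup>* `` {v} \<in> set LL" using ladder_self LD_props by blast
  then obtain j where "j < length LL" "LL!j = (inc_edges C D)\<^sup>* `` {v}" by (auto simp: in_set_conv_nth)
  then show ?thesis using ladder_self[OF v] by auto
qed

lemma LL_uniq: "i < length LL \<Longrightarrow> j < length LL \<Longrightarrow> v \<in> LL!i \<Longrightarrow> v \<in> LL!j \<Longrightarrow> i = j"
  using LL_lt unfolding ladder_less_def by (metis linorder_neqE_nat order.irrefl)

lemma LL_sub: "i < length LL \<Longrightarrow> LL!i \<subseteq> (inc_vertices C D)"
  using LL_in ladder_sub by blast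

lemma in_same:
  assumes j: "j < length LL" and a: "a \<in> LL!j" and b: "b \<in> (inc_vertices C D)"
    and nb: "\<forall>i<j. b \<notin> LL!i" and nlt: "\<not> elem_val a < elem_val b"
  shows "b \<in> LL!j"
proof -
  obtain j' where j': "j' < length LL" "b \<in> LL!j'" using LL_idx[OF b] by blast
  have "\<not> j' < j" using nb j' by blast
  moreover have "\<not> j < j'" using LL_lt[of j j'] j' a nlt unfolding ladder_less_def by blast
  ultimately show ?thesis using j' by (metis linorder_neqE_nat)
qed

lemma preC_sub: "k \<le> length LL \<Longrightarrow> pre LL Inl k \<subseteq> set C"
proof
  fix x assume k: "k \<le> length LL" and "x \<in> pre LL Inl k"
  then obtain j where j: "j < k" "Inl x \<in> LL!j" unfolding pre_def by blast
  then have "Inl x \<in> inc_vertices C D" using LL_sub[of j] k by auto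
  then show "x \<in> set C" unfolding inc_vertices_def by auto
qed

lemma preD_sub: "k \<le> length LL \<Longrightarrow> pre LL Inr k \<subseteq> set D"
proof
  fix x assume k: "k \<le> length LL" and "x \<in> pre LL Inr k"
  then obtain j where j: "j < k" "Inr x \<in> LL!j" unfolding pre_def by blast
  then have "Inr x \<in> inc_vertices C D" using LL_sub[of j] k by auto
  then show "x \<in> set D" unfolding inc_vertices_def by auto
qed

lemma preC_dn: "k \<le> length LL \<Longrightarrow> downset (pre LL Inl k) C"
  unfolding downset_def
proof (intro ballI impI)
  fix x y assume k: "k \<le> length LL" and x: "x \<in> pre LL Inl k" and y: "y \<in> set C" "y < x"
  obtain j where j: "j < k" "Inl x \<in> LL!j" using x unfolding pre_def by blast
  have "Inl y \<in> (inc_vertices C D)" using y unfolding inc_vertices_def by simp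
  then obtain j' where j': "j' < length LL" "Inl y \<in> LL!j'" using LL_idx by blast
  have "\<not> j < j'" using LL_lt[of j j'] j j' y(2) unfolding ladder_less_def by fastforce
  then have "j' < k" using j by linarith
  then show "y \<in> pre LL Inl k" using j' unfolding pre_def by auto
qed

lemma preD_dn: "k \<le> length LL \<Longrightarrow> downset (pre LL Inr k) D"
  unfolding downset_def
proof (intro ballI impI)
  fix x y assume k: "k \<le> length LL" and x: "x \<in> pre LL Inr k" and y: "y \<in> set D" "y < x"
  obtain j where j: "j < k" "Inr x \<in> LL!j" using x unfolding pre_def by blast
  have "Inr y \<in> (inc_vertices C D)" using y unfolding inc_vertices_def by simp
  then obtain j' where j': "j' < length LL" "Inr y \<in> LL!j'" using LL_idx by blast
  have "\<not> j < j'" using LL_lt[of j j'] j j' y(2) unfolding ladder_less_def by fastforce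
  then have "j' < k" using j by linarith
  then show "y \<in> pre LL Inr k" using j' unfolding pre_def by auto
qed

lemma sumC: "k \<le> length LL \<Longrightarrow> (\<Sum>j<k. part_in_C (LL!j)) = card (pre LL Inl k)"
proof -
  assume k: "k \<le> length LL"
  have fin: "finite {x. Inl x \<in> LL!j}" if "j < length LL" for j
  proof -
    have "{x. Inl x \<in> LL!j} \<subseteq> set C" using LL_sub[OF that] unfolding inc_vertices_def by auto
    then show ?thesis by (rule finite_subset) simp
  qed
  show ?thesis unfolding part_in_C_def using pre_sum[of LL Inl, OF fin LL_uniq k] by simp
qed

lemma sumD: "k \<le> length LL \<Longrightarrow> (\<Sum>j<k. part_in_D (LL!j)) = card (pre LL Inr k)"
proof -
  assume k: "k \<le> length LL"
  have fin: "finite {x. Inr x \<in> LL!j}" if "j < length LL" for j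
  proof -
    have "{x. Inr x \<in> LL!j} \<subseteq> set D" using LL_sub[OF that] unfolding inc_vertices_def by auto
    then show ?thesis by (rule finite_subset) simp
  qed
  show ?thesis unfolding part_in_D_def using pre_sum[of LL Inr, OF fin LL_uniq k] by simp
qed

end



lemma edge_idx: "(p,q) \<in> inc_edges C D \<Longrightarrow> \<exists>i<length C. \<exists>j<length D. sim_P (C!i) (D!j) \<and>
        ((p = Inl (C!i) \<and> q = Inr (D!j)) \<or> (p = Inr (D!j) \<and> q = Inl (C!i)))"
  unfolding inc_edges_def by (auto simp: in_set_conv_nth)

context
  fixes C D :: "'a::order list"
  assumes sC: "sorted_wrt (<) C" and sD: "sorted_wrt (<) D"
begin

lemma cond_iff: "ladder_condition C D \<longleftrightarrow>
   (\<forall>k\<in>{1..length (LL C D)}. card (pre (LL C D) Inr k) \<le> card (pre (LL C D) Inl k))"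
  unfolding ladder_condition_def Let_def using sumC[OF sC sD] sumD[OF sC sD] by auto

lemma pair_fwd:
  assumes len: "length D \<le> length C" and T: "\<forall>r<length D. \<not> D!r < C!r"
  shows "ladder_condition C D"
  unfolding cond_iff
proof
  fix k assume "k \<in> {1..length (LL C D)}"
  then have k: "k \<le> length (LL C D)" by simp
  show "card (pre (LL C D) Inr k) \<le> card (pre (LL C D) Inl k)"
  proof (rule ccontr)
    define r where "r = card (pre (LL C D) Inl k)"
    assume "\<not> card (pre (LL C D) Inr k) \<le> card (pre (LL C D) Inl k)"
    then have rq: "r < card (pre (LL C D) Inr k)" unfolding r_def by simp
    have "card (pre (LL C D) Inr k) \<le> card (set D)"
      by (rule card_mono) (use preD_sub[OF sC sD k] in auto)
    also have "\<dots> \<le> length D" by (rule card_length)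
    finally have rD: "r < length D" using rq by simp
    have rC: "r < length C" using rD len by simp
    have Dr: "D!r \<in> pre (LL C D) Inr k"
    proof (rule ccontr)
      assume "D!r \<notin> pre (LL C D) Inr k"
      then have "card (pre (LL C D) Inr k) \<le> r"
        using dn_b[OF sD preD_sub[OF sC sD k] preD_dn[OF sC sD k] rD] by simp
      then show False using rq by simp
    qed
    have Cr: "C!r \<notin> pre (LL C D) Inl k"
    proof
      assume "C!r \<in> pre (LL C D) Inl k"
      then have "Suc r \<le> card (pre (LL C D) Inl k)"
        using dn_a[OF sC preC_sub[OF sC sD k] preC_dn[OF sC sD k] rC] by simp
      then show False unfolding r_def by simp
    qed
    obtain j where j: "j < k" "Inr (D!r) \<in> (LL C D)!j" using Dr unfolding pre_def by blast
    have "Inl (C!r) \<in> inc_vertices C D" using rC unfolding inc_vertices_def by simp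
    then obtain j' where j': "j' < length (LL C D)" "Inl (C!r) \<in> (LL C D)!j'"
      using LL_idx[OF sC sD] by blast
    have "\<not> j' < k" using Cr j' unfolding pre_def by blast
    then have "ladder_less ((LL C D)!j) ((LL C D)!j')" using LL_lt[OF sC sD, of j j'] j j' by simp
    then have "D!r < C!r" using j j' unfolding ladder_less_def by fastforce
    then show False using T rD by blast
  qed
qed

lemma pair_bwd:
  assumes tof: "three_one_free TYPE('a)" and len: "length D \<le> length C"
    and cond: "ladder_condition C D"
  shows "\<forall>r<length D. \<not> D!r < C!r"
proof (intro allI impI notI)
  fix r assume rD: "r < length D" and lt: "D!r < C!r"
  have rC: "r < length C" using rD len by simp
  let ?L = "LL C D"
  have cnd: "\<And>k. k \<in> {1..length ?L} \<Longrightarrow> card (pre ?L Inr k) \<le> card (pre ?L Inl k)"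
    using cond unfolding cond_iff by blast
  have "Inr (D!r) \<in> inc_vertices C D" using rD unfolding inc_vertices_def by simp
  then obtain j where j: "j < length ?L" "Inr (D!r) \<in> ?L!j" using LL_idx[OF sC sD] by blast
  have "Inl (C!r) \<in> inc_vertices C D" using rC unfolding inc_vertices_def by simp
  then obtain j' where j': "j' < length ?L" "Inl (C!r) \<in> ?L!j'" using LL_idx[OF sC sD] by blast
  consider "j' < j" | "j < j'" | "j = j'" by linarith
  then show False
  proof cases
    case 1
    then have "C!r < D!r" using LL_lt[OF sC sD, of j' j] j j' unfolding ladder_less_def by fastforce
    then show False using lt by simp
  next
    case 2
    define k where "k = Suc j"
    have k: "k \<le> length ?L" "k \<in> {1..length ?L}" using 2 j' unfolding k_def by auto
    have "D!r \<in> pre ?L Inr k" using j unfolding pre_def k_def by blast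
    then have q: "Suc r \<le> card (pre ?L Inr k)"
      using dn_a[OF sD preD_sub[OF sC sD k(1)] preD_dn[OF sC sD k(1)] rD] by simp
    have "C!r \<notin> pre ?L Inl k"
    proof
      assume "C!r \<in> pre ?L Inl k"
      then obtain i where "i < k" "Inl (C!r) \<in> ?L!i" unfolding pre_def by blast
      then have "i = j'" using LL_uniq[OF sC sD, of i j' "Inl (C!r)"] j' k by simp
      then show False using 2 \<open>i < k\<close> unfolding k_def by simp
    qed
    then have p: "card (pre ?L Inl k) \<le> r"
      using dn_b[OF sC preC_sub[OF sC sD k(1)] preC_dn[OF sC sD k(1)] rC] by simp
    show False using cnd[OF k(2)] p q by simp
  next
    case 3
    define s where "s = card (pre ?L Inl j)"
    define u where "u = card (pre ?L Inr j)"
    have jl: "j \<le> length ?L" using j by simp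
    have us: "u \<le> s"
    proof (cases j)
      case 0 then show ?thesis unfolding u_def s_def pre_def by simp
    next
      case (Suc j0) then show ?thesis unfolding u_def s_def using cnd[of j] j by simp
    qed
    have notpreC: "C!r \<notin> pre ?L Inl j"
    proof
      assume "C!r \<in> pre ?L Inl j"
      then obtain i where "i < j" "Inl (C!r) \<in> ?L!i" unfolding pre_def by blast
      then show False using LL_uniq[OF sC sD, of i j' "Inl (C!r)"] j' 3 j by simp
    qed
    have sr: "s \<le> r" unfolding s_def
      using dn_b[OF sC preC_sub[OF sC sD jl] preC_dn[OF sC sD jl] rC notpreC] .
    define n where "n = r - s"
    have Cj: "Inl (C!r) \<in> ?L!j" using j' 3 by simp
    have Ll: "?L!j \<in> ladders C D" using LL_in[OF sC sD j(1)] .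
    have lbx: "s \<le> i" if "i < length C" "Inl (C!i) \<in> ?L!j" for i
    proof (rule ccontr)
      assume "\<not> s \<le> i"
      then have "C!i \<in> pre ?L Inl j"
        using dn_b[OF sC preC_sub[OF sC sD jl] preC_dn[OF sC sD jl] that(1)] unfolding s_def by linarith
      then obtain i' where "i' < j" "Inl (C!i) \<in> ?L!i'" unfolding pre_def by blast
      then show False using LL_uniq[OF sC sD, of i' j "Inl (C!i)"] j that by simp
    qed
    have lby: "u \<le> i" if "i < length D" "Inr (D!i) \<in> ?L!j" for i
    proof (rule ccontr)
      assume "\<not> u \<le> i"
      then have "D!i \<in> pre ?L Inr j"
        using dn_b[OF sD preD_sub[OF sC sD jl] preD_dn[OF sC sD jl] that(1)] unfolding u_def by linarith
      then obtain i' where "i' < j" "Inr (D!i) \<in> ?L!i'" unfolding pre_def by blast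
      then show False using LL_uniq[OF sC sD, of i' j "Inr (D!i)"] j that by simp
    qed
    have inx: "\<forall>i\<le>n. Inl (C!(s+i)) \<in> ?L!j"
    proof (intro allI impI)
      fix i assume i: "i \<le> n"
      define t where "t = s + i"
      have t: "t \<le> r" "t < length C" using i sr rC unfolding t_def n_def by auto
      have np: "C!t \<notin> pre ?L Inl j"
      proof
        assume "C!t \<in> pre ?L Inl j"
        then have "Suc t \<le> s" using dn_a[OF sC preC_sub[OF sC sD jl] preC_dn[OF sC sD jl] t(2)]
          unfolding s_def by simp
        then show False unfolding t_def by simp
      qed
      have "Inl (C!t) \<in> ?L!j"
      proof (rule in_same[OF sC sD j(1) Cj])
        show "Inl (C!t) \<in> inc_vertices C D" using t unfolding inc_vertices_def by simp
        show "\<forall>i<j. Inl (C!t) \<notin> ?L!i" using np unfolding pre_def by blast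
        show "\<not> elem_val (Inl (C!r)) < elem_val (Inl (C!t))"
          using sl_le[OF sC t(1) rC] by (simp add: leD)
      qed
      then show "Inl (C!(s+i)) \<in> ?L!j" unfolding t_def .
    qed
    have iny: "\<forall>i\<le>n. Inr (D!(u+i)) \<in> ?L!j"
    proof (intro allI impI)
      fix i assume i: "i \<le> n"
      define t where "t = u + i"
      have t: "t \<le> r" "t < length D" using i sr rD us unfolding t_def n_def by auto
      have np: "D!t \<notin> pre ?L Inr j"
      proof
        assume "D!t \<in> pre ?L Inr j"
        then have "Suc t \<le> u" using dn_a[OF sD preD_sub[OF sC sD jl] preD_dn[OF sC sD jl] t(2)]
          unfolding u_def by simp
        then show False unfolding t_def by simp
      qed
      have "Inr (D!t) \<in> ?L!j"
      proof (rule in_same[OF sC sD j(1) j(2)])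
        show "Inr (D!t) \<in> inc_vertices C D" using t unfolding inc_vertices_def by simp
        show "\<forall>i<j. Inr (D!t) \<notin> ?L!i" using np unfolding pre_def by blast
        show "\<not> elem_val (Inr (D!r)) < elem_val (Inr (D!t))"
          using sl_le[OF sD t(1) rD] by (simp add: leD)
      qed
      then show "Inr (D!(u+i)) \<in> ?L!j" unfolding t_def .
    qed
    have lx: "s + n < length C" using sr rC unfolding n_def by simp
    have ly: "u + n < length D" using sr rD us unfolding n_def by simp
    have sim: "sim_P (C!(s+n)) (D!(u+n))"
      by (rule core[OF tof sC sD inj_Inl inj_Inr _ edge_idx ladder_closed[OF Ll] ladder_conn[OF Ll] lbx lby inx lx iny ly])
         simp
    have "D!(u+n) \<le> D!r" using sl_le[OF sD _ rD, of "u+n"] sr us unfolding n_def by simp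
    then have "D!(u+n) < C!(s+n)" using lt sr unfolding n_def by (simp add: order.strict_trans1)
    then show False using sim unfolding sim_P_def by simp
  qed
qed

end

theorem mainTheorem18:
  fixes T :: "'a::{order,finite} list list"
  assumes "three_one_free TYPE('a)"
    and "P_array T"
  shows "P_tableau T \<longleftrightarrow>
           (\<forall>i. Suc i < length T \<longrightarrow> ladder_condition (T ! i) (T ! Suc i))"
proof -
  have cols: "sorted_wrt (<) (T!i)" if "i < length T" for i
    using assms(2) that unfolding P_array_def by auto
  have lens: "length (T!Suc i) \<le> length (T!i)" if "Suc i < length T" for i
  proof -
    have "sorted_wrt (\<ge>) (map length T)" using assms(2) unfolding P_array_def young_filling_def by simp
    then have "(map length T)!i \<ge> (map length T)!Suc i" using sorted_wrt_nth_less[of "(\<ge>)" "map length T" i "Suc i"] that by simp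
    then show ?thesis using that by simp
  qed
  have pair: "(\<forall>r<length (T!Suc i). \<not> T!Suc i!r < T!i!r) \<longleftrightarrow> ladder_condition (T!i) (T!Suc i)"
    if "Suc i < length T" for i
    using pair_fwd[OF cols cols lens] pair_bwd[OF cols cols assms(1) lens] that by (meson Suc_lessD)
  show ?thesis
    unfolding P_tableau_def using assms(2) pair by blast
qed


end
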